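(* Let $\phi$ be a partial flow on a metric space $X$, let $\Lambda$ be an isolated set of $\phi$, and let $N$ be an isolating neighborhood of $\Lambda$. Then there is a $\phi$-convex open set $U$ with $\Lambda\subset U\subset N$.
   Context: A partial flow on a metric space $X$ is a continuous map $\phi\colon\Gamma\to X$, $\Gamma\subset\mathbb{R}\times X$ open. Here $\Gamma_x=\{t:(t,x)\in\Gamma\}$ is a connected set containing $0$, $\Gamma_{\phi_t(x)}=\Gamma_x-t$, $\phi_0=\mathrm{id}$, and $\phi_s\phi_t(x)=\phi_{s+t}(x)$ whenever $s,t,s+t\in\Gamma_x$. A $\phi$-invariant set $\Lambda$ (one with $\phi_t(x)\in\Lambda$ for $x\in\Lambda$, $t\in\Gamma_x$) is isolated if there is a compact neighborhood $N$ of $\Lambda$ (an isolating neighborhood) such that $\phi_{\Gamma_x}(x)\subseteq N$ implies $x\in\Lambda$. An open set $U$ is $\phi$-convex if, whenever $t\ge0$, $x\in U$, $\phi_t(x)\in U$ and $\phi_{[0,t]}(x)\subset\overline U$, we have $\phi_{[0,t]}(x)\subset U$. *)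

theory Defs
  imports "HOL-Analysis.Analysis"
begin

text \<open>A partial flow on the metric space X (modelled as the whole type 'a).
  The flow is given by its domain Dom (a subset of real x X) and a curried map phi,
  of which only the values on Dom matter.\<close>

definition fiber :: "(real \<times> 'a) set \<Rightarrow> 'a \<Rightarrow> real set" where
  "fiber Dom x = {t. (t, x) \<in> Dom}"

definition partial_flow :: "(real \<times> 'a::metric_space) set \<Rightarrow> (real \<Rightarrow> 'a \<Rightarrow> 'a) \<Rightarrow> bool" where
  "partial_flow Dom phi \<longleftrightarrow>
     open Dom \<and>
     continuous_on Dom (\<lambda>(t, x). phi t x) \<and>
     (\<forall>x. connected (fiber Dom x) \<and> 0 \<in> fiber Dom x) \<and>
     (\<forall>x. \<forall>t \<in> fiber Dom x. fiber Dom (phi t x) = (\<lambda>s. s - t) ` fiber Dom x) \<and>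
     (\<forall>x. phi 0 x = x) \<and>
     (\<forall>x s t. s \<in> fiber Dom x \<and> t \<in> fiber Dom x \<and> s + t \<in> fiber Dom x
        \<longrightarrow> phi s (phi t x) = phi (s + t) x)"

definition flow_invariant :: "(real \<times> 'a) set \<Rightarrow> (real \<Rightarrow> 'a \<Rightarrow> 'a) \<Rightarrow> 'a set \<Rightarrow> bool" where
  "flow_invariant Dom phi L \<longleftrightarrow> (\<forall>x \<in> L. \<forall>t \<in> fiber Dom x. phi t x \<in> L)"

definition isolating_nbhd :: "(real \<times> 'a::metric_space) set \<Rightarrow> (real \<Rightarrow> 'a \<Rightarrow> 'a) \<Rightarrow> 'a set \<Rightarrow> 'a set \<Rightarrow> bool" where
  "isolating_nbhd Dom phi L N \<longleftrightarrow>
     compact N \<and> L \<subseteq> interior N \<and>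
     (\<forall>x. (\<lambda>t. phi t x) ` fiber Dom x \<subseteq> N \<longrightarrow> x \<in> L)"

definition isolated_set :: "(real \<times> 'a::metric_space) set \<Rightarrow> (real \<Rightarrow> 'a \<Rightarrow> 'a) \<Rightarrow> 'a set \<Rightarrow> bool" where
  "isolated_set Dom phi L \<longleftrightarrow> flow_invariant Dom phi L \<and> (\<exists>N. isolating_nbhd Dom phi L N)"

definition flow_convex :: "(real \<times> 'a::metric_space) set \<Rightarrow> (real \<Rightarrow> 'a \<Rightarrow> 'a) \<Rightarrow> 'a set \<Rightarrow> bool" where
  "flow_convex Dom phi U \<longleftrightarrow> open U \<and>
     (\<forall>t x. t \<ge> 0 \<and> x \<in> U \<and> t \<in> fiber Dom x \<and> phi t x \<in> U \<and>
        (\<lambda>s. phi s x) ` {0..t} \<subseteq> closure U \<longrightarrow> (\<lambda>s. phi s x) ` {0..t} \<subseteq> U)"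

end

theory Submission imports Defs begin

definition Fwd :: "(real \<times> 'a) set \<Rightarrow> (real \<Rightarrow> 'a \<Rightarrow> 'a) \<Rightarrow> 'a set \<Rightarrow> 'a set \<Rightarrow> 'a set" where
  "Fwd Dom phi W A = {y. \<exists>r\<ge>0. (\<forall>s\<in>{0..r}. (s, y) \<in> Dom \<and> phi s y \<in> W) \<and> phi r y \<in> A}"

definition rdom :: "(real \<times> 'a) set \<Rightarrow> (real \<times> 'a) set" where
  "rdom Dom = {(t, x). (-t, x) \<in> Dom}"

definition rphi :: "(real \<Rightarrow> 'a \<Rightarrow> 'a) \<Rightarrow> real \<Rightarrow> 'a \<Rightarrow> 'a" where
  "rphi phi t x = phi (-t) x"

lemma fiber_rdom: "t \<in> fiber (rdom Dom) x \<longleftrightarrow> -t \<in> fiber Dom x"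
  by (simp add: fiber_def rdom_def)

lemma image_shift_iff: "s \<in> (\<lambda>s. s - t) ` F \<longleftrightarrow> s + (t::real) \<in> F"
  by (auto simp: image_iff intro!: bexI[of _ "s+t"])

context
  fixes Dom :: "(real \<times> 'a::metric_space) set" and phi :: "real \<Rightarrow> 'a \<Rightarrow> 'a"
  assumes pf: "partial_flow Dom phi"
begin

lemma pf_open: "open Dom" using pf unfolding partial_flow_def by blast
lemma pf_cont: "continuous_on Dom (\<lambda>(t, x). phi t x)" using pf unfolding partial_flow_def by blast
lemma pf_zero: "phi 0 x = x" using pf unfolding partial_flow_def by blast
lemma pf_0: "0 \<in> fiber Dom x" using pf unfolding partial_flow_def by blast
lemma pf_conn: "connected (fiber Dom x)" using pf unfolding partial_flow_def by blast
lemma pf_law: "s \<in> fiber Dom x \<Longrightarrow> t \<in> fiber Dom x \<Longrightarrow> s + t \<in> fiber Dom x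
        \<Longrightarrow> phi s (phi t x) = phi (s + t) x" using pf unfolding partial_flow_def by blast

lemma pf_fiber: "t \<in> fiber Dom x \<Longrightarrow> s \<in> fiber Dom (phi t x) \<longleftrightarrow> s + t \<in> fiber Dom x"
proof -
  assume t: "t \<in> fiber Dom x"
  have "fiber Dom (phi t x) = (\<lambda>s. s - t) ` fiber Dom x" using pf t unfolding partial_flow_def by blast
  moreover have "s \<in> (\<lambda>s. s - t) ` fiber Dom x \<longleftrightarrow> s + t \<in> fiber Dom x"
    by (auto simp: image_iff intro!: bexI[of _ "s+t"])
  ultimately show ?thesis by simp
qed

lemma fiber_iff: "t \<in> fiber Dom x \<longleftrightarrow> (t, x) \<in> Dom" by (simp add: fiber_def)

lemma fiber_interval: "a \<in> fiber Dom x \<Longrightarrow> b \<in> fiber Dom x \<Longrightarrow> a \<le> c \<Longrightarrow> c \<le> b \<Longrightarrow> c \<in> fiber Dom x"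
  using pf_conn[of x] unfolding connected_iff_interval by blast

lemma fiber_open: "open (fiber Dom x)"
proof -
  have "open ((\<lambda>t::real. (t, x)) -` Dom)"
    by (rule continuous_open_vimage[OF pf_open]) (intro continuous_intros)
  moreover have "(\<lambda>t. (t, x)) -` Dom = fiber Dom x" by (auto simp: fiber_def)
  ultimately show ?thesis by simp
qed

lemma orbit_cont: "continuous_on (fiber Dom x) (\<lambda>s. phi s x)"
proof -
  have "continuous_on (fiber Dom x) (\<lambda>s. (\<lambda>(t, x). phi t x) (s, x))"
    by (rule continuous_on_compose2[OF pf_cont]) (auto intro!: continuous_intros simp: fiber_def)
  then show ?thesis by simp
qed

lemma group_law:
  assumes t: "t \<in> fiber Dom x" and st: "s + t \<in> fiber Dom x"
  shows "phi s (phi t x) = phi (s + t) x"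
proof -
  let ?I = "fiber Dom (phi t x)"
  let ?S = "{s \<in> ?I. phi s (phi t x) = phi (s + t) x}"
  have I: "s \<in> ?I" using pf_fiber[OF t] st by simp
  have c1: "continuous_on ?I (\<lambda>s. phi s (phi t x))" by (rule orbit_cont)
  have c2: "continuous_on ?I (\<lambda>s. phi (s + t) x)"
    by (rule continuous_on_compose2[OF orbit_cont[of x]]) (auto intro!: continuous_intros simp: pf_fiber[OF t])
  have "closedin (top_of_set ?I) (?I \<inter> (\<lambda>s. (phi s (phi t x), phi (s + t) x)) -` {y. \<exists>z. y = (z, z)})"
    by (rule continuous_closedin_preimage[OF continuous_on_Pair[OF c1 c2] closed_diagonal])
  moreover have "?I \<inter> (\<lambda>s. (phi s (phi t x), phi (s + t) x)) -` {y. \<exists>z. y = (z, z)} = ?S" by auto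
  ultimately have clo: "closedin (top_of_set ?I) ?S" by simp
  have "\<forall>u\<in>?S. \<exists>e>0. ball u e \<subseteq> ?S"
  proof
    fix u assume s: "u \<in> ?S"
    then have sI: "u \<in> ?I" and eq: "phi u (phi t x) = phi (u + t) x" by auto
    have st': "u + t \<in> fiber Dom x" using sI pf_fiber[OF t] by simp
    obtain e1 where e1: "e1 > 0" "ball 0 e1 \<subseteq> ?I" using fiber_open pf_0 open_contains_ball by blast
    obtain e2 where e2: "e2 > 0" "ball 0 e2 \<subseteq> fiber Dom x" using fiber_open pf_0 open_contains_ball by blast
    obtain e3 where e3: "e3 > 0" "ball u e3 \<subseteq> ?I" using fiber_open sI open_contains_ball by blast
    define e where "e = min e1 (min e2 e3)"
    have "ball u e \<subseteq> ?S"
    proof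
      fix s' assume "s' \<in> ball u e"
      then have d: "\<bar>s' - u\<bar> < e1" "\<bar>s' - u\<bar> < e2" "\<bar>s' - u\<bar> < e3"
        by (auto simp: e_def dist_real_def)
      have a1: "s' - u \<in> ?I" using e1 d by (auto simp: dist_real_def)
      have a2: "s' - u \<in> fiber Dom x" using e2 d by (auto simp: dist_real_def)
      have a3: "s' \<in> ?I" using e3 d by (auto simp: dist_real_def abs_minus_commute)
      have "phi s' (phi t x) = phi ((s' - u) + u) (phi t x)" by simp
      also have "\<dots> = phi (s' - u) (phi u (phi t x))" using pf_law[OF a1 sI] a3 by simp
      also have "\<dots> = phi (s' - u) (phi (u + t) x)" using eq by simp
      also have "\<dots> = phi ((s' - u) + (u + t)) x"
        using pf_law[OF a2 st'] a3 pf_fiber[OF t] by (simp add: algebra_simps)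
      finally show "s' \<in> ?S" using a3 by (simp add: algebra_simps)
    qed
    moreover have "e > 0" using e1 e2 e3 by (simp add: e_def)
    ultimately show "\<exists>e>0. ball u e \<subseteq> ?S" by blast
  qed
  then have "open ?S" by (simp add: open_contains_ball)
  then have op: "openin (top_of_set ?I) ?S" unfolding openin_open by (intro exI[of _ ?S]) auto
  have "0 \<in> ?S" using pf_0[of "phi t x"] by (simp add: pf_zero)
  then have "?S = ?I" using pf_conn[of "phi t x"] op clo unfolding connected_clopen by blast
  then show ?thesis using I by blast
qed

lemma flow_tendsto:
  assumes "(t, z) \<in> Dom" "(tt \<longlongrightarrow> t) F" "(zz \<longlongrightarrow> z) F"
  shows "((\<lambda>n. phi (tt n) (zz n)) \<longlongrightarrow> phi t z) F"
proof -
  have "isCont (\<lambda>(t, x). phi t x) (t, z)"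
    using pf_cont pf_open assms(1) continuous_on_eq_continuous_at by blast
  from isCont_tendsto_compose[OF this tendsto_Pair[OF assms(2,3)]] show ?thesis by simp
qed

lemma flow_ev_dom:
  assumes "(t, z) \<in> Dom" "(tt \<longlongrightarrow> t) F" "(zz \<longlongrightarrow> z) F"
  shows "eventually (\<lambda>n. (tt n, zz n) \<in> Dom) F"
  using topological_tendstoD[OF tendsto_Pair[OF assms(2,3)] pf_open assms(1)] .

lemma Fwd_open:
  assumes W: "open W" and A: "open A"
  shows "open (Fwd Dom phi W A)"
proof -
 have "\<forall>y\<in>Fwd Dom phi W A. \<exists>T. open T \<and> y \<in> T \<and> T \<subseteq> Fwd Dom phi W A"
 proof
  fix y assume "y \<in> Fwd Dom phi W A"
  then obtain r where r: "r \<ge> 0" "\<forall>s\<in>{0..r}. (s, y) \<in> Dom \<and> phi s y \<in> W" "phi r y \<in> A"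
    unfolding Fwd_def by blast
  let ?f = "\<lambda>(t, x). phi t x"
  have o1: "open (?f -` W \<inter> Dom)" using continuous_on_open_vimage[OF pf_open] pf_cont W by blast
  have o2: "open (?f -` A \<inter> Dom)" using continuous_on_open_vimage[OF pf_open] pf_cont A by blast
  have oG: "open ((\<lambda>p::'a \<times> real. (snd p, fst p)) -` (?f -` W \<inter> Dom))"
    by (rule continuous_open_vimage[OF o1]) (intro continuous_intros)
  have oH: "open ((\<lambda>z. (r, z)) -` (?f -` A \<inter> Dom))"
    by (rule continuous_open_vimage[OF o2]) (intro continuous_intros)
  have "{y} \<times> {0..r} \<subseteq> (\<lambda>p::'a \<times> real. (snd p, fst p)) -` (?f -` W \<inter> Dom)"
    using r(2) by auto
  from Elementary_Topology.tube_lemma[OF compact_Icc oG this]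
  obtain X0 where X0: "y \<in> X0" "open X0" "X0 \<times> {0..r} \<subseteq> (\<lambda>p::'a \<times> real. (snd p, fst p)) -` (?f -` W \<inter> Dom)"
    by blast
  let ?T = "X0 \<inter> (\<lambda>z. (r, z)) -` (?f -` A \<inter> Dom)"
  have "?T \<subseteq> Fwd Dom phi W A"
  proof
    fix z assume z: "z \<in> ?T"
    have "\<forall>s\<in>{0..r}. (s, z) \<in> Dom \<and> phi s z \<in> W"
    proof
      fix s assume "s \<in> {0..r}"
      then have "(z, s) \<in> X0 \<times> {0..r}" using z by auto
      then have "(z, s) \<in> (\<lambda>p::'a \<times> real. (snd p, fst p)) -` (?f -` W \<inter> Dom)" using X0(3) by blast
      then show "(s, z) \<in> Dom \<and> phi s z \<in> W" by simp
    qed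
    moreover have "phi r z \<in> A" using z by auto
    ultimately show "z \<in> Fwd Dom phi W A" using r(1) unfolding Fwd_def by blast
  qed
  moreover have "y \<in> ?T" using X0 r by auto
  moreover have "open ?T" using X0(2) oH by blast
  ultimately show "\<exists>T. open T \<and> y \<in> T \<and> T \<subseteq> Fwd Dom phi W A" by blast
 qed
 then show ?thesis by (simp only: open_subopen[of "Fwd Dom phi W A"])
qed

lemma Fwd_back:
  assumes x: "x \<in> Fwd Dom phi W A" and a: "a \<ge> 0" "-a \<in> fiber Dom x"
    and aW: "\<forall>q\<in>{0..a}. phi (-q) x \<in> W"
  shows "phi (-a) x \<in> Fwd Dom phi W A"
proof -
  obtain r where r: "r \<ge> 0" "\<forall>s\<in>{0..r}. (s, x) \<in> Dom \<and> phi s x \<in> W" "phi r x \<in> A"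
    using x unfolding Fwd_def by blast
  have rf: "r \<in> fiber Dom x" using r by (auto simp: fiber_def)
  have "\<forall>s\<in>{0..a+r}. (s, phi (-a) x) \<in> Dom \<and> phi s (phi (-a) x) \<in> W"
  proof
    fix s assume s: "s \<in> {0..a+r}"
    have "-a \<le> s + - a" "s + - a \<le> r" using s by auto
    then have sf: "s + - a \<in> fiber Dom x" by (rule fiber_interval[OF a(2) rf])
    have "(s, phi (-a) x) \<in> Dom" using pf_fiber[OF a(2)] sf by (simp add: fiber_def)
    moreover have eq: "phi s (phi (-a) x) = phi (s + - a) x" using group_law[OF a(2) sf] .
    moreover have "phi (s + - a) x \<in> W"
    proof (cases "s \<le> a")
      case True
      then have "a - s \<in> {0..a}" using s by auto
      then have "phi (-(a - s)) x \<in> W" using aW by blast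
      then show ?thesis by simp
    next
      case False
      then have "s + - a \<in> {0..r}" using s by auto
      then show ?thesis using r(2) by blast
    qed
    ultimately show "(s, phi (-a) x) \<in> Dom \<and> phi s (phi (-a) x) \<in> W" by simp
  qed
  moreover have "phi (a + r) (phi (-a) x) = phi (a + r + - a) x"
    using group_law[OF a(2), of "a + r"] rf by simp
  then have "phi (a + r) (phi (-a) x) \<in> A" using r(3) by simp
  moreover have "a + r \<ge> 0" using r a by simp
  ultimately show ?thesis unfolding Fwd_def by blast
qed

lemma Fwd_sub: "Fwd Dom phi W A \<subseteq> W"
proof
  fix x assume "x \<in> Fwd Dom phi W A"
  then obtain r where "r \<ge> 0" "\<forall>s\<in>{0..r}. (s, x) \<in> Dom \<and> phi s x \<in> W" unfolding Fwd_def by blast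
  then have "phi 0 x \<in> W" by auto
  then show "x \<in> W" by (simp add: pf_zero)
qed

lemma Fwd_base: "x \<in> W \<Longrightarrow> x \<in> A \<Longrightarrow> x \<in> Fwd Dom phi W A"
  unfolding Fwd_def using pf_0[of x] by (intro CollectI exI[of _ 0]) (auto simp: pf_zero fiber_def)

lemma inv_closed:
  assumes inv: "flow_invariant Dom phi L" and iso: "isolating_nbhd Dom phi L N"
  shows "closed L"
proof -
  have Nc: "closed N" using iso compact_imp_closed unfolding isolating_nbhd_def by blast
  have LN: "L \<subseteq> N" using iso interior_subset unfolding isolating_nbhd_def by blast
  show ?thesis unfolding closed_sequential_limits
  proof (intro allI impI)
    fix l z assume lz: "(\<forall>n. l n \<in> L) \<and> l \<longlonglongrightarrow> z"
    have "(\<lambda>t. phi t z) ` fiber Dom z \<subseteq> N"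
    proof
      fix w assume "w \<in> (\<lambda>t. phi t z) ` fiber Dom z"
      then obtain t where t: "t \<in> fiber Dom z" "w = phi t z" by blast
      have td: "(t, z) \<in> Dom" using t by (simp add: fiber_def)
      have lim: "(\<lambda>n. phi t (l n)) \<longlonglongrightarrow> phi t z" using flow_tendsto[OF td tendsto_const] lz by blast
      have ev: "eventually (\<lambda>n. (t, l n) \<in> Dom) sequentially" using flow_ev_dom[OF td tendsto_const] lz by blast
      have "eventually (\<lambda>n. phi t (l n) \<in> N) sequentially"
      proof (rule eventually_mono[OF ev])
        fix n assume "(t, l n) \<in> Dom"
        then have "phi t (l n) \<in> L" using inv lz unfolding flow_invariant_def fiber_def by blast
        then show "phi t (l n) \<in> N" using LN by blast
      qed
      then have "phi t z \<in> N" using Lim_in_closed_set[OF Nc _ _ lim] by simp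
      then show "w \<in> N" using t by simp
    qed
    then show "z \<in> L" using iso unfolding isolating_nbhd_def by blast
  qed
qed

lemma no_escape:
  assumes inv: "flow_invariant Dom phi L" and Lc: "closed L" and LN: "L \<subseteq> N" and Nc: "closed N"
    and WN: "W \<subseteq> N"
    and yF: "\<forall>n. y' n \<in> Fwd Dom phi W {z. \<exists>l\<in>L. dist l z < e n}"
    and e: "e \<longlonglongrightarrow> 0" and y': "y' \<longlonglongrightarrow> y"
    and t: "t \<ge> 0" "t \<in> fiber Dom y" "phi t y \<notin> N"
  shows False
proof -
  have "\<forall>n. \<exists>r. r \<ge> 0 \<and> (\<forall>s\<in>{0..r}. (s, y' n) \<in> Dom \<and> phi s (y' n) \<in> W) \<and> (\<exists>l\<in>L. dist l (phi r (y' n)) < e n)"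
    using yF unfolding Fwd_def by blast
  from choice[OF this] obtain r where r: "\<forall>n. r n \<ge> 0 \<and> (\<forall>s\<in>{0..r n}. (s, y' n) \<in> Dom \<and> phi s (y' n) \<in> W) \<and> (\<exists>l\<in>L. dist l (phi (r n) (y' n)) < e n)"
    by blast
  have td: "(t, y) \<in> Dom" using t by (simp add: fiber_def)
  have lim1: "(\<lambda>n. phi t (y' n)) \<longlonglongrightarrow> phi t y" by (rule flow_tendsto[OF td tendsto_const y'])
  have ev1: "eventually (\<lambda>n. phi t (y' n) \<in> -N) sequentially"
    using topological_tendstoD[OF lim1 open_Compl[OF Nc]] t(3) by simp
  have ev2: "eventually (\<lambda>n. (t, y' n) \<in> Dom) sequentially" by (rule flow_ev_dom[OF td tendsto_const y'])
  have ev3: "eventually (\<lambda>n. r n < t) sequentially"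
  proof (rule eventually_mono[OF eventually_conj[OF ev1 ev2]])
    fix n assume n: "phi t (y' n) \<in> -N \<and> (t, y' n) \<in> Dom"
    show "r n < t"
    proof (rule ccontr)
      assume "\<not> r n < t"
      then have "t \<in> {0..r n}" using t by auto
      then have "phi t (y' n) \<in> W" using r by blast
      then show False using n WN by blast
    qed
  qed
  define rr where "rr n = min (r n) t" for n
  have rr: "\<forall>n. rr n \<in> {0..t}" using r t by (auto simp: rr_def)
  obtain \<tau> \<sigma> where tau: "\<tau> \<in> {0..t}" "strict_mono \<sigma>" "(rr \<circ> \<sigma>) \<longlonglongrightarrow> \<tau>"
    using seq_compactE[OF compact_imp_seq_compact[OF compact_Icc] rr] by metis
  obtain M where M: "\<forall>n\<ge>M. r n < t" using ev3 unfolding eventually_sequentially by blast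
  have ev4: "eventually (\<lambda>n. (rr \<circ> \<sigma>) n = r (\<sigma> n)) sequentially"
    unfolding eventually_sequentially
  proof (intro exI allI impI)
    fix n assume "M \<le> n"
    then have "M \<le> \<sigma> n" using seq_suble[OF tau(2), of n] by simp
    then show "(rr \<circ> \<sigma>) n = r (\<sigma> n)" using M by (simp add: rr_def)
  qed
  have lr: "(\<lambda>n. r (\<sigma> n)) \<longlonglongrightarrow> \<tau>" by (rule Lim_transform_eventually[OF tau(3) ev4])
  have ly: "(\<lambda>n. y' (\<sigma> n)) \<longlonglongrightarrow> y" using LIMSEQ_subseq_LIMSEQ[OF y' tau(2)] by (simp add: comp_def)
  have tauf: "\<tau> \<in> fiber Dom y" using fiber_interval[OF pf_0 t(2)] tau(1) by auto
  have tauD: "(\<tau>, y) \<in> Dom" using tauf by (simp add: fiber_def)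
  have lp: "(\<lambda>n. phi (r (\<sigma> n)) (y' (\<sigma> n))) \<longlonglongrightarrow> phi \<tau> y" by (rule flow_tendsto[OF tauD lr ly])
  have le: "(\<lambda>n. e (\<sigma> n)) \<longlonglongrightarrow> 0" using LIMSEQ_subseq_LIMSEQ[OF e tau(2)] by (simp add: comp_def)
  have "phi \<tau> y \<in> closure L"
    unfolding closure_approachable
  proof (intro allI impI)
    fix \<epsilon> :: real assume \<epsilon>: "\<epsilon> > 0"
    have "eventually (\<lambda>n. dist (phi (r (\<sigma> n)) (y' (\<sigma> n))) (phi \<tau> y) < \<epsilon>/2) sequentially"
      using tendstoD[OF lp, of "\<epsilon>/2"] \<epsilon> by simp
    moreover have "eventually (\<lambda>n. dist (e (\<sigma> n)) 0 < \<epsilon>/2) sequentially"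
      using tendstoD[OF le, of "\<epsilon>/2"] \<epsilon> by simp
    ultimately have "eventually (\<lambda>n. dist (phi (r (\<sigma> n)) (y' (\<sigma> n))) (phi \<tau> y) < \<epsilon>/2 \<and> dist (e (\<sigma> n)) 0 < \<epsilon>/2) sequentially"
      by (rule eventually_conj)
    then obtain K where K: "\<forall>n\<ge>K. dist (phi (r (\<sigma> n)) (y' (\<sigma> n))) (phi \<tau> y) < \<epsilon>/2 \<and> dist (e (\<sigma> n)) 0 < \<epsilon>/2"
      unfolding eventually_sequentially by blast
    then have n: "dist (phi (r (\<sigma> K)) (y' (\<sigma> K))) (phi \<tau> y) < \<epsilon>/2" "dist (e (\<sigma> K)) 0 < \<epsilon>/2" by auto
    obtain l where l: "l \<in> L" "dist l (phi (r (\<sigma> K)) (y' (\<sigma> K))) < e (\<sigma> K)" using r by blast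
    have "e (\<sigma> K) < \<epsilon>/2" using n(2) by (simp add: dist_real_def)
    then have "dist l (phi \<tau> y) < \<epsilon>"
      using dist_triangle[of l "phi \<tau> y" "phi (r (\<sigma> K)) (y' (\<sigma> K))"] l n(1) by linarith
    then show "\<exists>w\<in>L. dist w (phi \<tau> y) < \<epsilon>" using l by blast
  qed
  then have zL: "phi \<tau> y \<in> L" using Lc closure_closed by simp
  have tt: "t - \<tau> \<in> fiber Dom (phi \<tau> y)" using pf_fiber[OF tauf] t(2) by simp
  have "phi (t - \<tau>) (phi \<tau> y) \<in> L" using inv zL tt unfolding flow_invariant_def by blast
  moreover have "phi (t - \<tau>) (phi \<tau> y) = phi t y" using group_law[OF tauf, of "t - \<tau>"] t(2) by simp
  ultimately show False using LN t(3) by auto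
qed

end

lemma partial_flow_rev:
  assumes pf: "partial_flow Dom phi"
  shows "partial_flow (rdom Dom) (rphi phi)"
proof -
  have neg: "continuous_on UNIV (\<lambda>p::real \<times> 'a. (- fst p, snd p))" by (intro continuous_intros)
  have "open ((\<lambda>p::real \<times> 'a. (- fst p, snd p)) -` Dom)"
    by (rule continuous_open_vimage[OF pf_open[OF pf]]) (intro continuous_intros)
  moreover have "(\<lambda>p::real \<times> 'a. (- fst p, snd p)) -` Dom = rdom Dom" unfolding rdom_def by force
  ultimately have o: "open (rdom Dom)" by simp
  have c: "continuous_on (rdom Dom) (\<lambda>(t, x). rphi phi t x)"
  proof -
    have im: "(\<lambda>p::real \<times> 'a. (- fst p, snd p)) ` rdom Dom \<subseteq> Dom" by (auto simp: rdom_def)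
    have "continuous_on (rdom Dom) (\<lambda>p. (\<lambda>(t, x). phi t x) ((\<lambda>p::real \<times> 'a. (- fst p, snd p)) p))"
      by (rule continuous_on_compose2[OF pf_cont[OF pf] continuous_on_subset[OF neg] im]) simp
    then show ?thesis by (simp add: rphi_def case_prod_unfold)
  qed
  have fe: "fiber (rdom Dom) x = uminus ` fiber Dom x" for x
    by (auto simp: fiber_rdom image_iff intro!: bexI[of _ "- _"])
  have conn: "connected (fiber (rdom Dom) x)" for x
    unfolding fe by (rule connected_continuous_image[OF _ pf_conn[OF pf]]) (intro continuous_intros)
  have z: "0 \<in> fiber (rdom Dom) x" for x using pf_0[OF pf] by (simp add: fiber_rdom)
  have sh: "fiber (rdom Dom) (rphi phi t x) = (\<lambda>s. s - t) ` fiber (rdom Dom) x"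
    if "t \<in> fiber (rdom Dom) x" for x t
  proof -
    have t: "-t \<in> fiber Dom x" using that by (simp add: fiber_rdom)
    show ?thesis
    proof (rule set_eqI)
      fix s
      have 1: "s \<in> fiber (rdom Dom) (rphi phi t x) \<longleftrightarrow> -s + -t \<in> fiber Dom x"
        unfolding fiber_rdom rphi_def using pf_fiber[OF pf t, of "-s"] by simp
      have 2: "s \<in> (\<lambda>s. s - t) ` fiber (rdom Dom) x \<longleftrightarrow> -(s + t) \<in> fiber Dom x"
        by (simp only: image_shift_iff fiber_rdom)
      have "-s + -t = -(s + t)" by simp
      then show "s \<in> fiber (rdom Dom) (rphi phi t x) \<longleftrightarrow> s \<in> (\<lambda>s. s - t) ` fiber (rdom Dom) x"
        using 1 2 by simp
    qed
  qed
  have law: "rphi phi s (rphi phi t x) = rphi phi (s + t) x"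
    if "s \<in> fiber (rdom Dom) x" "t \<in> fiber (rdom Dom) x" "s + t \<in> fiber (rdom Dom) x" for x s t
    using pf_law[OF pf, of "-s" x "-t"] that by (simp add: fiber_rdom rphi_def)
  have zz: "\<forall>x. rphi phi 0 x = x" using pf_zero[OF pf] by (simp add: rphi_def)
  show ?thesis unfolding partial_flow_def
    apply (intro conjI)
    subgoal by (rule o)
    subgoal by (rule c)
    subgoal using conn z by blast
    subgoal using sh by blast
    subgoal by (rule zz)
    subgoal using law by blast
    done
qed


theorem mainTheorem3:
  fixes Dom :: "(real \<times> 'a::metric_space) set" and phi :: "real \<Rightarrow> 'a \<Rightarrow> 'a"
    and L N :: "'a set"
  assumes "partial_flow Dom phi"
    and "isolated_set Dom phi L"
    and "isolating_nbhd Dom phi L N"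
  shows "\<exists>U. open U \<and> flow_convex Dom phi U \<and> L \<subseteq> U \<and> U \<subseteq> N"
proof -
  note pf = assms(1)
  note iso = assms(3)
  have pfr: "partial_flow (rdom Dom) (rphi phi)" by (rule partial_flow_rev[OF pf])
  have inv: "flow_invariant Dom phi L" using assms(2) unfolding isolated_set_def by blast
  have invr: "flow_invariant (rdom Dom) (rphi phi) L"
    using inv unfolding flow_invariant_def by (simp add: fiber_rdom rphi_def)
  have Ncp: "compact N" using iso unfolding isolating_nbhd_def by blast
  have Nc: "closed N" using Ncp compact_imp_closed by blast
  have LI: "L \<subseteq> interior N" using iso unfolding isolating_nbhd_def by blast
  have LN: "L \<subseteq> N" using LI interior_subset by blast
  have Lc: "closed L" by (rule inv_closed[OF pf inv iso])
  define A where "A n = {z. \<exists>l\<in>L. dist l z < 1 / real (Suc n)}" for n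
  define U where "U n = Fwd Dom phi (interior N) (A n) \<inter> Fwd (rdom Dom) (rphi phi) (interior N) (A n)" for n
  have oA: "open (A n)" for n
  proof -
    have "A n = (\<Union>l\<in>L. ball l (1 / real (Suc n)))" by (auto simp: A_def ball_def)
    then show ?thesis by auto
  qed
  have oU: "open (U n)" for n
    unfolding U_def using Fwd_open[OF pf open_interior oA] Fwd_open[OF pfr open_interior oA] by auto
  have UI: "U n \<subseteq> interior N" for n
    unfolding U_def using Fwd_sub[OF pf] by blast
  have UN: "U n \<subseteq> N" for n using UI interior_subset by blast
  have LU: "L \<subseteq> U n" for n
  proof
    fix l assume l: "l \<in> L"
    have lA: "l \<in> A n" using l by (auto simp: A_def intro!: bexI[of _ l])
    have lI: "l \<in> interior N" using LI l by blast
    have "l \<in> Fwd Dom phi (interior N) (A n)" by (rule Fwd_base[OF pf lI lA])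
    moreover have "l \<in> Fwd (rdom Dom) (rphi phi) (interior N) (A n)" by (rule Fwd_base[OF pfr lI lA])
    ultimately show "l \<in> U n" unfolding U_def by blast
  qed
  have cND: "compact (N - interior N)"
  proof -
    have "N - interior N = N \<inter> - interior N" by blast
    then show ?thesis using compact_Int_closed[OF Ncp] by (simp add: closed_Compl)
  qed
  have "\<exists>n. closure (U n) \<subseteq> interior N"
  proof (rule ccontr)
    assume "\<not> ?thesis"
    then have "\<forall>n. \<exists>y. y \<in> closure (U n) \<and> y \<notin> interior N" by blast
    from choice[OF this] obtain ys where ys: "\<forall>n. ys n \<in> closure (U n) \<and> ys n \<notin> interior N" by blast
    have "\<forall>n. \<exists>y'. y' \<in> U n \<and> dist y' (ys n) < 1 / real (Suc n)"
    proof
      fix n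
      have "ys n \<in> closure (U n)" using ys by blast
      moreover have "(1::real) / real (Suc n) > 0" by simp
      ultimately show "\<exists>y'. y' \<in> U n \<and> dist y' (ys n) < 1 / real (Suc n)"
        unfolding closure_approachable by blast
    qed
    from choice[OF this] obtain ys' where ys': "\<forall>n. ys' n \<in> U n \<and> dist (ys' n) (ys n) < 1 / real (Suc n)" by blast
    have ysN: "\<forall>n. ys n \<in> N - interior N"
    proof
      fix n
      have "closure (U n) \<subseteq> N" using closure_minimal[OF UN Nc] .
      then show "ys n \<in> N - interior N" using ys by blast
    qed
    obtain y \<sigma> where y: "y \<in> N - interior N" "strict_mono \<sigma>" "(ys \<circ> \<sigma>) \<longlonglongrightarrow> y"
      using seq_compactE[OF compact_imp_seq_compact[OF cND] ysN] by metis
    have linv: "(\<lambda>n. inverse (real (Suc (\<sigma> n)))) \<longlonglongrightarrow> 0"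
      using LIMSEQ_subseq_LIMSEQ[OF LIMSEQ_inverse_real_of_nat y(2)] by (simp add: comp_def)
    then have e: "(\<lambda>n. 1 / real (Suc (\<sigma> n))) \<longlonglongrightarrow> 0" by (simp add: inverse_eq_divide)
    have ly: "(\<lambda>n. ys (\<sigma> n)) \<longlonglongrightarrow> y" using y(3) by (simp add: comp_def)
    have ly': "(\<lambda>n. ys' (\<sigma> n)) \<longlonglongrightarrow> y"
      unfolding tendsto_iff
    proof (intro allI impI)
      fix \<epsilon> :: real assume \<epsilon>: "\<epsilon> > 0"
      have "eventually (\<lambda>n. dist (ys (\<sigma> n)) y < \<epsilon>/2) sequentially" using tendstoD[OF ly, of "\<epsilon>/2"] \<epsilon> by simp
      moreover have "eventually (\<lambda>n. dist (1 / real (Suc (\<sigma> n))) 0 < \<epsilon>/2) sequentially" using tendstoD[OF e, of "\<epsilon>/2"] \<epsilon> by simp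
      ultimately show "eventually (\<lambda>n. dist (ys' (\<sigma> n)) y < \<epsilon>) sequentially"
      proof (rule eventually_elim2)
        fix n assume a: "dist (ys (\<sigma> n)) y < \<epsilon>/2" and b: "dist (1 / real (Suc (\<sigma> n))) 0 < \<epsilon>/2"
        have "dist (ys' (\<sigma> n)) (ys (\<sigma> n)) < 1 / real (Suc (\<sigma> n))" using ys' by blast
        moreover have "1 / real (Suc (\<sigma> n)) < \<epsilon>/2" using b by (simp add: dist_real_def)
        ultimately show "dist (ys' (\<sigma> n)) y < \<epsilon>"
          using a dist_triangle[of "ys' (\<sigma> n)" y "ys (\<sigma> n)"] by linarith
      qed
    qed
    have yL: "y \<notin> L" using y(1) LI by blast
    then obtain t where t: "t \<in> fiber Dom y" "phi t y \<notin> N" using iso unfolding isolating_nbhd_def by blast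
    have yF: "\<forall>n. ys' (\<sigma> n) \<in> Fwd Dom phi (interior N) {z. \<exists>l\<in>L. dist l z < 1 / real (Suc (\<sigma> n))}"
      using ys' unfolding U_def A_def by blast
    have yFr: "\<forall>n. ys' (\<sigma> n) \<in> Fwd (rdom Dom) (rphi phi) (interior N) {z. \<exists>l\<in>L. dist l z < 1 / real (Suc (\<sigma> n))}"
      using ys' unfolding U_def A_def by blast
    show False
    proof (cases "t \<ge> 0")
      case True
      show False by (rule no_escape[OF pf inv Lc LN Nc interior_subset yF e ly' True t])
    next
      case False
      have a: "-t \<ge> 0" using False by simp
      have b: "-t \<in> fiber (rdom Dom) y" using t by (simp add: fiber_rdom)
      have c: "rphi phi (-t) y \<notin> N" using t by (simp add: rphi_def)
      show False by (rule no_escape[OF pfr invr Lc LN Nc interior_subset yFr e ly' a b c])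
    qed
  qed
  then obtain n where n: "closure (U n) \<subseteq> interior N" by blast
  have conv: "flow_convex Dom phi (U n)"
    unfolding flow_convex_def
  proof (intro conjI allI impI)
    show "open (U n)" by (rule oU)
    fix t x assume H: "0 \<le> t \<and> x \<in> U n \<and> t \<in> fiber Dom x \<and> phi t x \<in> U n \<and> (\<lambda>s. phi s x) ` {0..t} \<subseteq> closure (U n)"
    show "(\<lambda>s. phi s x) ` {0..t} \<subseteq> U n"
    proof
      fix w assume "w \<in> (\<lambda>s. phi s x) ` {0..t}"
      then obtain s where s: "s \<in> {0..t}" "w = phi s x" by blast
      have seg: "\<forall>q\<in>{0..t}. phi q x \<in> interior N" using H n by blast
      have tf: "t \<in> fiber Dom x" using H by blast
      have "0 \<le> s" "s \<le> t" using s by auto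
      then have sf: "s \<in> fiber Dom x" by (rule fiber_interval[OF pf pf_0[OF pf] tf])
      have w1: "phi s x \<in> Fwd Dom phi (interior N) (A n)"
      proof -
        have a: "-(t - s) \<in> fiber Dom (phi t x)" using pf_fiber[OF pf tf] sf by simp
        have aW: "\<forall>q\<in>{0..t-s}. phi (-q) (phi t x) \<in> interior N"
        proof
          fix q assume q: "q \<in> {0..t-s}"
          have "s \<le> -q + t" "-q + t \<le> t" using q by auto
          then have qf: "-q + t \<in> fiber Dom x" by (rule fiber_interval[OF pf sf tf])
          have "phi (-q) (phi t x) = phi (-q + t) x" by (rule group_law[OF pf tf qf])
          moreover have "-q + t \<in> {0..t}" using q s by auto
          ultimately show "phi (-q) (phi t x) \<in> interior N" using seg by simp
        qed
        have xF: "phi t x \<in> Fwd Dom phi (interior N) (A n)" using H unfolding U_def by blast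
        have nn: "t - s \<ge> 0" using s by auto
        have "phi (-(t-s)) (phi t x) \<in> Fwd Dom phi (interior N) (A n)" by (rule Fwd_back[OF pf xF nn a aW])
        moreover have "phi (-(t-s)) (phi t x) = phi s x" using group_law[OF pf tf, of "-(t-s)"] sf by simp
        ultimately show ?thesis by simp
      qed
      have w2: "phi s x \<in> Fwd (rdom Dom) (rphi phi) (interior N) (A n)"
      proof -
        have a: "-s \<in> fiber (rdom Dom) x" using sf by (simp add: fiber_rdom)
        have aW: "\<forall>q\<in>{0..s}. rphi phi (-q) x \<in> interior N" using seg s by (auto simp: rphi_def)
        have xF: "x \<in> Fwd (rdom Dom) (rphi phi) (interior N) (A n)" using H unfolding U_def by blast
        have nn: "s \<ge> 0" using s by auto
        have "rphi phi (-s) x \<in> Fwd (rdom Dom) (rphi phi) (interior N) (A n)" by (rule Fwd_back[OF pfr xF nn a aW])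
        then show ?thesis by (simp add: rphi_def)
      qed
      show "w \<in> U n" using w1 w2 s unfolding U_def by simp
    qed
  qed
  show ?thesis using conv oU[of n] LU[of n] UN[of n] by blast
qed

end
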